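(* Consider the $r$-cGA without borders on a function $f\in\{r\text{-OneMax},\,G\text{-OneMax}\}$, and let $(\mathcal F_t)$ be the natural filtration of the process. (1) For any $i\in\{1,\dots,n\}$, let $X_t=p^{(t)}_{i,r-1}$ and $\varepsilon_i=\mathbb E[X_{t+1}-X_t\mid\mathcal F_t]$. Then the random variable $X_{t+1}-X_t-\varepsilon_i$ is $\left(4X_t(1-X_t)/K^2+2\varepsilon_i/K,\;K\right)$-sub-Gaussian. (2) Let $\varphi_t=\sum_{i=1}^n(1-p^{(t)}_{i,r-1})$ and let $\varepsilon_t=\mathbb E[\varphi_t-\varphi_{t+1}\mid\mathcal F_t]$, and suppose $\varepsilon_t\ge\sqrt{\varphi_t}/(30K)$. Then the random variable $\varphi_t-\varphi_{t+1}-\varepsilon_t$ is $(8\varphi_t/K^2,\;K)$-sub-Gaussian.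
   Context: Let $n\ge1$, $r\ge2$, $K>0$. $r$-OneMax$(x)=\sum_i\mathbf 1[x_i=r-1]$ and \textit{G}-OneMax$(x)=\sum_i x_i$ on $\{0,\dots,r-1\}^n$. The $r$-cGA without borders with parameter $K$ maintains frequencies $p^{(t)}_{i,j}$, initially $1/r$; each iteration samples two strings $x,y$ independently (position $i$ takes value $j$ with probability $p^{(t)}_{i,j}$, independently), swaps them if $f(x)<f(y)$, and sets $p^{(t+1)}_{i,j}=p^{(t)}_{i,j}+\frac1K(\mathbf 1[x_i=j]-\mathbf 1[y_i=j])$. A random variable $Y$ is called $(c,\delta)$-sub-Gaussian if $\mathbb E[e^{\lambda Y}]\le e^{\lambda^2 c/2}$ for all $0\le\lambda\le\delta$ (conditionally on $\mathcal F_t$). *)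

theory Defs
  imports "HOL-Probability.Probability"
begin

text \<open>Positions are indexed 0..n-1 and values 0..r-1. A frequency state is
  p :: nat => nat => real, p i j = frequency of value j at position i.
  A search point is x :: nat => nat (only positions < n matter).\<close>

definition rOneMax :: "nat \<Rightarrow> nat \<Rightarrow> (nat \<Rightarrow> nat) \<Rightarrow> real" where
  "rOneMax r n x = real (card {i. i < n \<and> x i = r - 1})"

definition GOneMax :: "nat \<Rightarrow> (nat \<Rightarrow> nat) \<Rightarrow> real" where
  "GOneMax n x = (\<Sum>i<n. real (x i))"

definition valid_freq :: "nat \<Rightarrow> nat \<Rightarrow> (nat \<Rightarrow> nat \<Rightarrow> real) \<Rightarrow> bool" where
  "valid_freq n r p \<longleftrightarrow> (\<forall>i<n. (\<forall>j<r. 0 \<le> p i j) \<and> (\<Sum>j<r. p i j) = 1)"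

definition sample :: "nat \<Rightarrow> nat \<Rightarrow> (nat \<Rightarrow> nat \<Rightarrow> real) \<Rightarrow> (nat \<Rightarrow> nat) pmf" where
  "sample n r p = Pi_pmf {..<n} 0 (\<lambda>i. embed_pmf (\<lambda>j. if j < r then p i j else 0))"

definition cga_update :: "real \<Rightarrow> (nat \<Rightarrow> nat \<Rightarrow> real) \<Rightarrow> (nat \<Rightarrow> nat) \<Rightarrow> (nat \<Rightarrow> nat) \<Rightarrow> (nat \<Rightarrow> nat \<Rightarrow> real)" where
  "cga_update K p x y = (\<lambda>i j. p i j + (1 / K) * ((if x i = j then 1 else 0) - (if y i = j then 1 else 0)))"

text \<open>One iteration of the r-cGA without borders: the law of p^(t+1) given p^(t) = p.\<close>
definition cga_step :: "nat \<Rightarrow> nat \<Rightarrow> real \<Rightarrow> ((nat \<Rightarrow> nat) \<Rightarrow> real) \<Rightarrow> (nat \<Rightarrow> nat \<Rightarrow> real) \<Rightarrow> (nat \<Rightarrow> nat \<Rightarrow> real) pmf" where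
  "cga_step n r K f p =
     bind_pmf (sample n r p) (\<lambda>x. bind_pmf (sample n r p) (\<lambda>y.
       return_pmf (if f x < f y then cga_update K p y x else cga_update K p x y)))"

inductive cga_reachable :: "nat \<Rightarrow> nat \<Rightarrow> real \<Rightarrow> ((nat \<Rightarrow> nat) \<Rightarrow> real) \<Rightarrow> (nat \<Rightarrow> nat \<Rightarrow> real) \<Rightarrow> bool"
  for n r K f where
  init: "cga_reachable n r K f (\<lambda>i j. 1 / real r)"
| step: "cga_reachable n r K f p \<Longrightarrow> valid_freq n r p \<Longrightarrow> q \<in> set_pmf (cga_step n r K f p)
          \<Longrightarrow> cga_reachable n r K f q"

definition sub_gaussian :: "'a pmf \<Rightarrow> ('a \<Rightarrow> real) \<Rightarrow> real \<Rightarrow> real \<Rightarrow> bool" where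
  "sub_gaussian M Y c \<delta> \<longleftrightarrow>
     (\<forall>l. 0 \<le> l \<and> l \<le> \<delta> \<longrightarrow>
        measure_pmf.expectation M (\<lambda>w. exp (l * Y w)) \<le> exp (l^2 * c / 2))"

end

theory Submission
  imports Defs
begin

lemma exp_neg_bound:
  fixes s :: real assumes "0 \<le> s"
  shows "exp (-s) \<le> 1 - s + s^2"
proof -
  have e: "1 + s + s^2/2 \<le> exp s" using exp_lower_Taylor_quadratic[OF assms] .
  have eq: "(1 - s + s^2) * (1 + s + s^2/2) = 1 + s^2/2 + s^3/2 + s^4/2"
    by (simp add: field_simps power2_eq_square power3_eq_cube power4_eq_xxxx)
  have "1 \<le> (1 - s + s^2) * (1 + s + s^2/2)"
    unfolding eq using assms by simp
  also have "\<dots> \<le> (1 - s + s^2) * exp s"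
  proof (rule mult_left_mono[OF e])
    have "0 \<le> (s - 1/2)^2 + 3/4" by simp
    also have "(s - 1/2)^2 + 3/4 = 1 - s + s^2" by (simp add: power2_eq_square algebra_simps)
    finally show "0 \<le> 1 - s + s^2" .
  qed
  finally have 1: "1 \<le> (1 - s + s^2) * exp s" .
  have "exp (-s) = exp (-s) * 1" by simp
  also have "\<dots> \<le> exp (-s) * ((1 - s + s^2) * exp s)" using 1 by (intro mult_left_mono) auto
  also have "\<dots> = (1 - s + s^2) * (exp (-s) * exp s)" by (simp only: ac_simps)
  also have "exp (-s) * exp s = 1" by (metis exp_minus_inverse mult.commute)
  finally show ?thesis by simp
qed

lemma cosh_bound:
  fixes s :: real assumes "0 \<le> s" "s \<le> 1"
  shows "exp s + exp (-s) - 2 \<le> 2 * s^2" "0 \<le> exp s + exp (-s) - 2"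
proof -
  show "exp s + exp (-s) - 2 \<le> 2 * s^2" using exp_bound[OF assms] exp_neg_bound[OF assms(1)] by simp
  show "0 \<le> exp s + exp (-s) - 2" using exp_ge_add_one_self[of s] exp_ge_add_one_self[of "-s"] by linarith
qed

lemma exp_mul_le1:
  fixes x :: real
  shows "exp (-x) * (1 + x) \<le> 1"
proof -
  have "1 + x \<le> exp x" by simp
  hence "exp (-x) * (1 + x) \<le> exp (-x) * exp x" by (rule mult_left_mono) simp
  moreover have "exp (-x) * exp x = 1" using exp_minus_inverse[of x] by (simp add: mult.commute)
  ultimately show ?thesis by linarith
qed

lemma R1:
  fixes s \<mu> m :: real
  assumes "0 \<le> \<mu>" "0 \<le> s" "s \<le> 1" "0 \<le> m"
  shows "exp (-(s*\<mu>)) * (1 + s*\<mu> + m * (exp s - 1 - s)) \<le> exp (s^2 * (m + \<mu>))"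
proof -
  have w1: "exp s - 1 - s \<le> s^2" using exp_bound[OF assms(2,3)] by simp
  have w0: "0 \<le> exp s - 1 - s" using exp_ge_add_one_self[of s] by linarith
  have a: "exp (-(s*\<mu>)) * (1 + s*\<mu>) \<le> 1" by (rule exp_mul_le1)
  have b: "exp (-(s*\<mu>)) * (m * (exp s - 1 - s)) \<le> m * s^2"
  proof -
    have "exp (-(s*\<mu>)) \<le> 1" using assms by simp
    moreover have "0 \<le> m * (exp s - 1 - s)" using assms w0 by simp
    ultimately have "exp (-(s*\<mu>)) * (m * (exp s - 1 - s)) \<le> m * (exp s - 1 - s)"
      by (simp add: mult_left_le_one_le)
    also have "\<dots> \<le> m * s^2" using w1 assms by (simp add: mult_left_mono)
    finally show ?thesis .
  qed
  have "exp (-(s*\<mu>)) * (1 + s*\<mu> + m * (exp s - 1 - s)) \<le> 1 + m * s^2"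
    using a b by (simp add: distrib_left)
  also have "\<dots> \<le> exp (m * s^2)" by (rule exp_ge_add_one_self)
  also have "\<dots> \<le> exp (s^2 * (m + \<mu>))" using assms by (simp add: algebra_simps)
  finally show ?thesis .
qed

lemma R2:
  fixes s \<mu> P u :: real
  assumes "0 \<le> \<mu>" "0 \<le> s" "P \<le> exp u" "0 \<le> u"
  shows "exp (-(s*\<mu>)) * (s*\<mu> + 2*P - 1) \<le> exp (2*u)"
proof -
  have a: "exp (-(s*\<mu>)) * (1 + s*\<mu>) \<le> 1" by (rule exp_mul_le1)
  have e1: "exp (-(s*\<mu>)) \<le> 1" "0 < exp (-(s*\<mu>))" using assms by auto
  have b: "exp (-(s*\<mu>)) * (2*P - 2) \<le> max 0 (2 * exp u - 2)"
  proof (cases "P \<le> 1")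
    case True
    hence "exp (-(s*\<mu>)) * (2*P - 2) \<le> 0" using e1 by (simp add: mult_nonneg_nonpos)
    thus ?thesis by simp
  next
    case False
    hence "exp (-(s*\<mu>)) * (2*P - 2) \<le> 2*P - 2" using e1 by (simp add: mult_left_le_one_le)
    thus ?thesis using assms by simp
  qed
  have c: "1 + max 0 (2 * exp u - 2) \<le> exp (2*u)"
  proof -
    have ee: "exp (2*u) = exp u * exp u" by (metis exp_add mult_2)
    have "1 \<le> exp u" using assms by simp
    have "0 \<le> (exp u - 1)^2" by simp
    hence "2 * exp u - 1 \<le> exp u * exp u" by (simp add: power2_eq_square algebra_simps)
    thus ?thesis unfolding ee using \<open>1 \<le> exp u\<close> by (simp add: max_def)
  qed
  have "exp (-(s*\<mu>)) * (s*\<mu> + 2*P - 1) = exp (-(s*\<mu>)) * (1 + s*\<mu>) + exp (-(s*\<mu>)) * (2*P - 2)"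
    by (simp add: algebra_simps)
  also have "\<dots> \<le> exp (2*u)" using a b c by linarith
  finally show ?thesis .
qed

lemma pw1:
  fixes s a b :: real and c :: bool
  assumes "a \<in> {0,1}" "b \<in> {0,1}" "0 \<le> s"
  shows "exp (s * (if c then b - a else a - b)) \<le> 1 + s * (if c then b - a else a - b) + (a + b - 2*a*b) * (exp s - 1 - s)"
proof -
  have "s \<le> (exp s - inverse(exp s)) / 2" by (rule real_le_x_sinh[OF assms(3)])
  hence h: "exp (-s) \<le> exp s - 2 * s" by (simp add: exp_minus)
  show ?thesis using assms h by (auto simp: algebra_simps)
qed

lemma pw2:
  fixes t :: real
  shows "exp t \<le> t + exp t + exp (-t) - 1"
  using exp_ge_add_one_self[of "-t"] by simp

definition row :: "nat \<Rightarrow> (nat \<Rightarrow> nat \<Rightarrow> real) \<Rightarrow> nat \<Rightarrow> nat pmf" where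
  "row r p i = embed_pmf (\<lambda>j. if j < r then p i j else 0)"

lemma sample_row: "sample n r p = Pi_pmf {..<n} 0 (row r p)"
  unfolding sample_def row_def by simp

lemma pmf_row:
  assumes "valid_freq n r p" "i < n"
  shows "pmf (row r p i) j = (if j < r then p i j else 0)"
  unfolding row_def
proof (rule pmf_embed_pmf)
  fix x show "0 \<le> (if x < r then p i x else 0)" using assms by (auto simp: valid_freq_def)
next
  have "(\<integral>\<^sup>+ x. ennreal (if x < r then p i x else 0) \<partial>count_space UNIV)
       = (\<Sum>x\<in>{..<r}. ennreal (if x < r then p i x else 0))"
    by (rule nn_integral_count_space') auto
  also have "\<dots> = ennreal (\<Sum>x\<in>{..<r}. p i x)"
    using assms by (subst sum_ennreal[symmetric]) (auto simp: valid_freq_def)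
  also have "\<dots> = 1" using assms by (simp add: valid_freq_def)
  finally show "(\<integral>\<^sup>+ x. ennreal (if x < r then p i x else 0) \<partial>count_space UNIV) = 1" .
qed

lemma set_row:
  assumes "valid_freq n r p" "i < n"
  shows "set_pmf (row r p i) \<subseteq> {..<r}"
  using pmf_row[OF assms] by (auto simp: set_pmf_eq split: if_splits)

lemma exp_row:
  fixes h :: "nat \<Rightarrow> real"
  assumes "valid_freq n r p" "i < n"
  shows "measure_pmf.expectation (row r p i) h = (\<Sum>j<r. p i j * h j)"
proof -
  have "measure_pmf.expectation (row r p i) h = (\<Sum>j\<in>{..<r}. h j * pmf (row r p i) j)"
    by (rule integral_measure_pmf_real) (use set_row[OF assms] in auto)
  also have "\<dots> = (\<Sum>j<r. p i j * h j)"
    by (rule sum.cong) (auto simp: pmf_row[OF assms])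
  finally show ?thesis .
qed

definition TT :: "nat \<Rightarrow> nat \<Rightarrow> (nat \<Rightarrow> nat) set" where
  "TT n r = {x. \<forall>i. (i < n \<longrightarrow> x i < r) \<and> (i \<ge> n \<longrightarrow> x i = 0)}"

lemma finite_TT: "finite (TT n r)"
proof -
  have "TT n r = PiE_dflt {..<n} 0 (\<lambda>_. {..<r})"
    by (auto simp: TT_def PiE_dflt_def)
  thus ?thesis by auto
qed

lemma set_sample:
  assumes "valid_freq n r p"
  shows "set_pmf (sample n r p) \<subseteq> TT n r"
proof -
  have "set_pmf (sample n r p) = PiE_dflt {..<n} 0 (set_pmf \<circ> row r p)"
    unfolding sample_row by (rule set_Pi_pmf) auto
  thus ?thesis using set_row[OF assms] by (force simp: PiE_dflt_def TT_def)
qed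

lemma finite_sample:
  assumes "valid_freq n r p"
  shows "finite (set_pmf (sample n r p))"
  using set_sample[OF assms] finite_TT finite_subset by blast

lemma pmf_sample:
  assumes "x \<in> TT n r"
  shows "pmf (sample n r p) x = (\<Prod>k<n. pmf (row r p k) (x k))"
  unfolding sample_row using assms by (subst pmf_Pi') (auto simp: TT_def)

definition win :: "((nat \<Rightarrow> nat) \<Rightarrow> real) \<Rightarrow> real \<Rightarrow> (nat \<Rightarrow> nat \<Rightarrow> real) \<Rightarrow> (nat \<Rightarrow> nat) \<Rightarrow> (nat \<Rightarrow> nat) \<Rightarrow> (nat \<Rightarrow> nat \<Rightarrow> real)" where
  "win f K p x y = (if f x < f y then cga_update K p y x else cga_update K p x y)"

lemma step_map: "cga_step n r K f p = map_pmf (\<lambda>(x,y). win f K p x y) (pair_pmf (sample n r p) (sample n r p))"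
  unfolding cga_step_def pair_pmf_def win_def by (simp add: map_bind_pmf)

lemma exp_S_sum:
  fixes h :: "(nat \<Rightarrow> nat) \<Rightarrow> real"
  assumes "valid_freq n r p"
  shows "measure_pmf.expectation (sample n r p) h = (\<Sum>x\<in>TT n r. pmf (sample n r p) x * h x)"
proof -
  have "measure_pmf.expectation (sample n r p) h = (\<Sum>x\<in>TT n r. h x * pmf (sample n r p) x)"
    by (rule integral_measure_pmf_real) (use set_sample[OF assms] finite_TT in auto)
  thus ?thesis by (simp add: mult.commute)
qed

lemma exp_pair_sum:
  fixes h :: "(nat \<Rightarrow> nat) \<times> (nat \<Rightarrow> nat) \<Rightarrow> real"
  assumes "valid_freq n r p"
  shows "measure_pmf.expectation (pair_pmf (sample n r p) (sample n r p)) h =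
     (\<Sum>x\<in>TT n r. \<Sum>y\<in>TT n r. pmf (sample n r p) x * pmf (sample n r p) y * h (x,y))"
proof -
  have "measure_pmf.expectation (pair_pmf (sample n r p) (sample n r p)) h =
     (\<Sum>z\<in>TT n r \<times> TT n r. h z * pmf (pair_pmf (sample n r p) (sample n r p)) z)"
    by (rule integral_measure_pmf_real) (use set_sample[OF assms] finite_TT in auto)
  also have "\<dots> = (\<Sum>z\<in>TT n r \<times> TT n r. pmf (sample n r p) (fst z) * pmf (sample n r p) (snd z) * h z)"
    by (rule sum.cong) (auto simp: pmf_pair)
  also have "\<dots> = (\<Sum>x\<in>TT n r. \<Sum>y\<in>TT n r. pmf (sample n r p) x * pmf (sample n r p) y * h (x,y))"
    by (subst sum.cartesian_product) (simp add: case_prod_beta)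
  finally show ?thesis .
qed

lemma exp_pair_prod:
  fixes u v :: "(nat \<Rightarrow> nat) \<Rightarrow> real"
  assumes "valid_freq n r p"
  shows "measure_pmf.expectation (pair_pmf (sample n r p) (sample n r p)) (\<lambda>z. u (fst z) * v (snd z)) =
     measure_pmf.expectation (sample n r p) u * measure_pmf.expectation (sample n r p) v"
  apply (subst exp_pair_sum[OF assms])
  apply (subst (1 2) exp_S_sum[OF assms])
  apply (subst sum_product)
  apply (rule sum.cong, simp)
  apply (rule sum.cong, simp)
  by (simp add: algebra_simps)

lemma integrable_pair:
  assumes "valid_freq n r p"
  shows "integrable (measure_pmf (pair_pmf (sample n r p) (sample n r p))) (h :: _ \<Rightarrow> real)"
  by (rule integrable_measure_pmf_finite) (simp add: finite_sample[OF assms])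

lemma integrable_step:
  assumes "valid_freq n r p"
  shows "integrable (measure_pmf (cga_step n r K f p)) (h :: _ \<Rightarrow> real)"
  by (rule integrable_measure_pmf_finite) (simp add: step_map finite_sample[OF assms])

lemma exp_marg:
  fixes h :: "nat \<Rightarrow> real"
  assumes "valid_freq n r p" "i < n"
  shows "measure_pmf.expectation (sample n r p) (\<lambda>x. h (x i)) = (\<Sum>j<r. p i j * h j)"
proof -
  have "measure_pmf.expectation (sample n r p) (\<lambda>x. h (x i)) =
        measure_pmf.expectation (map_pmf (\<lambda>x. x i) (sample n r p)) h" by simp
  also have "map_pmf (\<lambda>x. x i) (sample n r p) = row r p i"
    unfolding sample_row using assms by (subst Pi_pmf_component) auto
  finally show ?thesis using exp_row[OF assms] by simp
qed

lemma exp_prod_S: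
  assumes "valid_freq n r p" "\<And>i v. i < n \<Longrightarrow> v < r \<Longrightarrow> g i v \<ge> 0"
  shows "measure_pmf.expectation (sample n r p) (\<lambda>x. \<Prod>i<n. g i (x i)) = (\<Prod>i<n. \<Sum>j<r. p i j * g i j)"
proof -
  have "measure_pmf.expectation (Pi_pmf {..<n} 0 (row r p)) (\<lambda>x. \<Prod>i\<in>{..<n}. g i (x i))
        = (\<Prod>i\<in>{..<n}. measure_pmf.expectation (row r p i) (\<lambda>v. g i v))"
  proof (rule expectation_prod_Pi_pmf)
    fix i assume i: "i \<in> {..<n}"
    show "integrable (measure_pmf (row r p i)) (g i)"
      by (rule integrable_measure_pmf_finite, rule finite_subset[OF set_row[OF assms(1)]]) (use i in auto)
  next
    fix i v assume i: "i \<in> {..<n}" and v: "v \<in> set_pmf (row r p i)"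
    have "v < r" using set_row[OF assms(1)] i v by auto
    thus "0 \<le> g i v" using assms(2) i by auto
  qed simp
  also have "\<dots> = (\<Prod>i<n. \<Sum>j<r. p i j * g i j)"
    by (rule prod.cong[OF refl]) (simp add: exp_row[OF assms(1)])
  finally show ?thesis unfolding sample_row .
qed

definition ind :: "nat \<Rightarrow> nat \<Rightarrow> real" where
  "ind r v = (if v = r - 1 then 1 else 0)"

definition dY :: "((nat \<Rightarrow> nat) \<Rightarrow> real) \<Rightarrow> nat \<Rightarrow> nat \<Rightarrow> (nat \<Rightarrow> nat) \<Rightarrow> (nat \<Rightarrow> nat) \<Rightarrow> real" where
  "dY f r i x y = (if f x < f y then ind r (y i) - ind r (x i) else ind r (x i) - ind r (y i))"

definition swp :: "nat \<Rightarrow> (nat \<Rightarrow> nat) \<times> (nat \<Rightarrow> nat) \<Rightarrow> (nat \<Rightarrow> nat) \<times> (nat \<Rightarrow> nat)" where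
  "swp i z = ((fst z)(i := snd z i), (snd z)(i := fst z i))"

lemma prod_upd:
  fixes F :: "nat \<Rightarrow> nat \<Rightarrow> real" and x :: "nat \<Rightarrow> nat" and n :: nat
  assumes "i < n"
  shows "(\<Prod>k<n. F k ((x(i:=b)) k)) = F i b * (\<Prod>k\<in>{..<n}-{i}. F k (x k))"
proof -
  have "(\<Prod>k<n. F k ((x(i:=b)) k)) = F i ((x(i:=b)) i) * (\<Prod>k\<in>{..<n}-{i}. F k ((x(i:=b)) k))"
    using assms prod.remove[of "{..<n}" i "\<lambda>k. F k ((x(i:=b)) k)"] by simp
  also have "(\<Prod>k\<in>{..<n}-{i}. F k ((x(i:=b)) k)) = (\<Prod>k\<in>{..<n}-{i}. F k (x k))"
    by (rule prod.cong) auto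
  finally show ?thesis by simp
qed

lemma sum_upd:
  fixes g :: "nat \<Rightarrow> real" and x :: "nat \<Rightarrow> nat" and n :: nat
  assumes "i < n"
  shows "(\<Sum>k<n. g ((x(i:=b)) k)) = (\<Sum>k<n. g (x k)) - g (x i) + g b"
proof -
  have "(\<Sum>k<n. g ((x(i:=b)) k)) = g ((x(i:=b)) i) + (\<Sum>k\<in>{..<n}-{i}. g ((x(i:=b)) k))"
    by (rule sum.remove) (use assms in auto)
  also have "(\<Sum>k\<in>{..<n}-{i}. g ((x(i:=b)) k)) = (\<Sum>k\<in>{..<n}-{i}. g (x k))"
    by (rule sum.cong) auto
  also have "(\<Sum>k<n. g (x k)) = g (x i) + (\<Sum>k\<in>{..<n}-{i}. g (x k))"
    using assms sum.remove[of "{..<n}" i "\<lambda>k. g (x k)"] by simp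
  ultimately show ?thesis by simp
qed

lemma swp_T:
  assumes "i < n" "z \<in> TT n r \<times> TT n r"
  shows "swp i z \<in> TT n r \<times> TT n r"
  using assms by (auto simp: swp_def TT_def)

lemma swp_swp: "swp i (swp i z) = z"
  by (auto simp: swp_def)

lemma pmf_swp:
  assumes "i < n" "x \<in> TT n r" "y \<in> TT n r"
  shows "pmf (sample n r p) (x(i := y i)) * pmf (sample n r p) (y(i := x i)) = pmf (sample n r p) x * pmf (sample n r p) y"
proof -
  have T: "x(i := y i) \<in> TT n r" "y(i := x i) \<in> TT n r" using assms by (auto simp: TT_def)
  define F where "F k v = pmf (row r p k) v" for k v
  have "pmf (sample n r p) (x(i := y i)) = F i (y i) * (\<Prod>k\<in>{..<n}-{i}. F k (x k))"
    unfolding pmf_sample[OF T(1)] F_def[symmetric] by (rule prod_upd[OF assms(1)])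
  moreover have "pmf (sample n r p) (y(i := x i)) = F i (x i) * (\<Prod>k\<in>{..<n}-{i}. F k (y k))"
    unfolding pmf_sample[OF T(2)] F_def[symmetric] by (rule prod_upd[OF assms(1)])
  moreover have "pmf (sample n r p) x = F i (x i) * (\<Prod>k\<in>{..<n}-{i}. F k (x k))"
    using prod_upd[OF assms(1), of F x "x i"] unfolding pmf_sample[OF assms(2)] F_def[symmetric] by simp
  moreover have "pmf (sample n r p) y = F i (y i) * (\<Prod>k\<in>{..<n}-{i}. F k (y k))"
    using prod_upd[OF assms(1), of F y "y i"] unfolding pmf_sample[OF assms(3)] F_def[symmetric] by simp
  ultimately show ?thesis by (simp add: ac_simps)
qed

lemma dY_pair:
  assumes "i < n" "x \<in> TT n r" "y \<in> TT n r" "r \<ge> 1"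
    and f: "\<And>z. f z = (\<Sum>k<n. g (z k))" and gm: "\<And>v. v < r \<Longrightarrow> g v \<le> g (r - 1)"
  shows "0 \<le> dY f r i x y + dY f r i (x(i := y i)) (y(i := x i))"
proof -
  have a: "x i < r" "y i < r" using assms by (auto simp: TT_def)
  have fx: "f (x(i := y i)) = f x - g (x i) + g (y i)" unfolding f by (rule sum_upd[OF assms(1)])
  have fy: "f (y(i := x i)) = f y - g (y i) + g (x i)" unfolding f by (rule sum_upd[OF assms(1)])
  have g1: "g (x i) \<le> g (r - 1)" "g (y i) \<le> g (r - 1)" using gm a by auto
  show ?thesis
    unfolding dY_def ind_def fx fy using g1
    by (cases "x i = r - 1"; cases "y i = r - 1") auto
qed

lemma drift:
  assumes "valid_freq n r p" "i < n" "r \<ge> 1"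
    and f: "\<And>z. f z = (\<Sum>k<n. g (z k))" and gm: "\<And>v. v < r \<Longrightarrow> g v \<le> g (r - 1)"
  shows "0 \<le> measure_pmf.expectation (pair_pmf (sample n r p) (sample n r p)) (\<lambda>z. dY f r i (fst z) (snd z))"
proof -
  define W where "W z = pmf (sample n r p) (fst z) * pmf (sample n r p) (snd z)" for z
  define D where "D z = dY f r i (fst z) (snd z)" for z
  define A where "A = TT n r \<times> TT n r"
  have E: "measure_pmf.expectation (pair_pmf (sample n r p) (sample n r p)) D = (\<Sum>z\<in>A. W z * D z)"
    unfolding exp_pair_sum[OF assms(1)] A_def W_def
    by (subst sum.cartesian_product) (simp add: case_prod_beta)
  have im: "swp i ` A \<subseteq> A" using swp_T[OF assms(2)] unfolding A_def by blast
  have bij: "bij_betw (swp i) A A"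
    by (rule bij_betw_byWitness[where f'="swp i"]) (use im swp_swp in auto)
  have "(\<Sum>z\<in>A. W z * D z) = (\<Sum>z\<in>A. W (swp i z) * D (swp i z))"
    by (rule sum.reindex_bij_betw[OF bij, symmetric])
  also have "\<dots> = (\<Sum>z\<in>A. W z * D (swp i z))"
    by (rule sum.cong) (auto simp: A_def W_def swp_def pmf_swp[OF assms(2)])
  finally have "2 * (\<Sum>z\<in>A. W z * D z) = (\<Sum>z\<in>A. W z * (D z + D (swp i z)))"
    by (simp add: sum.distrib algebra_simps)
  also have "\<dots> \<ge> 0"
  proof (rule sum_nonneg)
    fix z assume z: "z \<in> A"
    have dp: "0 \<le> dY f r i x y + dY f r i (x(i:=y i)) (y(i:=x i))" if "x \<in> TT n r" "y \<in> TT n r" for x y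
      by (rule dY_pair[where g=g]) (use that assms in auto)
    have "0 \<le> W z" by (simp add: W_def)
    moreover have "0 \<le> D z + D (swp i z)"
      using z dp by (auto simp: A_def D_def swp_def)
    ultimately show "0 \<le> W z * (D z + D (swp i z))" by simp
  qed
  finally have "0 \<le> (\<Sum>z\<in>A. W z * D z)" by simp
  thus ?thesis using E unfolding D_def by simp
qed

lemma freq_bounds:
  assumes "valid_freq n r p" "i < n" "j < r"
  shows "0 \<le> p i j" "p i j \<le> 1"
proof -
  show "0 \<le> p i j" using assms by (auto simp: valid_freq_def)
  have "p i j \<le> (\<Sum>k<r. p i k)"
    by (rule member_le_sum) (use assms in \<open>auto simp: valid_freq_def\<close>)
  thus "p i j \<le> 1" using assms by (auto simp: valid_freq_def)
qed

lemma sum_ind: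
  assumes "valid_freq n r p" "i < n" "r \<ge> 1"
  shows "(\<Sum>j<r. p i j * (if j = r - 1 then A else B)) = p i (r - 1) * A + (1 - p i (r - 1)) * B"
proof -
  have "(\<Sum>j<r. p i j * (if j = r - 1 then A else B)) = (\<Sum>j<r. B * p i j + (if j = r - 1 then p i j * (A - B) else 0))"
    by (rule sum.cong) (auto simp: algebra_simps)
  also have "\<dots> = B * (\<Sum>j<r. p i j) + p i (r - 1) * (A - B)"
    using assms(3) by (simp add: sum.distrib sum_distrib_left[symmetric])
  also have "(\<Sum>j<r. p i j) = 1" using assms by (simp add: valid_freq_def)
  finally show ?thesis by (simp add: algebra_simps)
qed

lemma exp_step:
  "measure_pmf.expectation (cga_step n r K f p) (h :: _ \<Rightarrow> real) =
   measure_pmf.expectation (pair_pmf (sample n r p) (sample n r p)) (\<lambda>z. h (win f K p (fst z) (snd z)))"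
  unfolding step_map by (simp add: case_prod_beta)

lemma win_i:
  "win f K p x y i (r - 1) - p i (r - 1) = dY f r i x y / K"
  unfolding win_def cga_update_def dY_def ind_def by (auto simp: divide_simps)

lemma E_ind:
  assumes "valid_freq n r p" "i < n" "r \<ge> 1"
  shows "measure_pmf.expectation (sample n r p) (\<lambda>x. ind r (x i)) = p i (r - 1)"
proof -
  have "measure_pmf.expectation (sample n r p) (\<lambda>x. ind r (x i)) = (\<Sum>j<r. p i j * (if j = r - 1 then 1 else 0))"
    using exp_marg[OF assms(1,2), of "ind r"] unfolding ind_def .
  also have "\<dots> = p i (r - 1)" using sum_ind[OF assms, of 1 0] by simp
  finally show ?thesis .
qed

lemma f_form:
  assumes "f = rOneMax r n \<or> f = GOneMax n"
  shows "\<exists>g. (\<forall>z. f z = (\<Sum>k<n. g (z k))) \<and> (\<forall>v<r. g v \<le> g (r - 1))"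
  using assms
proof
  assume f: "f = rOneMax r n"
  have "\<forall>z. f z = (\<Sum>k<n. ind r (z k))"
  proof
    fix z
    have "f z = (\<Sum>k\<in>{k\<in>{..<n}. z k = r - 1}. 1)" unfolding f rOneMax_def by simp
    also have "\<dots> = (\<Sum>k<n. ind r (z k))" by (subst sum.inter_filter) (auto simp: ind_def)
    finally show "f z = (\<Sum>k<n. ind r (z k))" .
  qed
  moreover have "\<forall>v<r. ind r v \<le> ind r (r - 1)" by (auto simp: ind_def)
  ultimately show ?thesis by blast
next
  assume f: "f = GOneMax n"
  have "\<forall>z. f z = (\<Sum>k<n. real (z k))" unfolding f GOneMax_def by simp
  moreover have "\<forall>v<r. real v \<le> real (r - 1)" by auto
  ultimately show ?thesis by blast
qed

lemma part1:
  assumes valid: "valid_freq n r p" and i: "i < n" and r: "r \<ge> 2" and K: "K > 0"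
    and f: "\<And>z. f z = (\<Sum>k<n. g (z k))" and gm: "\<And>v. v < r \<Longrightarrow> g v \<le> g (r - 1)"
  shows "let X = p i (r - 1);
             \<epsilon> = measure_pmf.expectation (cga_step n r K f p) (\<lambda>q. q i (r - 1) - X)
         in sub_gaussian (cga_step n r K f p) (\<lambda>q. q i (r - 1) - X - \<epsilon>)
              (4 * X * (1 - X) / K^2 + 2 * \<epsilon> / K) K"
proof -
  define X where "X = p i (r - 1)"
  define Pr where "Pr = pair_pmf (sample n r p) (sample n r p)"
  define D where "D z = dY f r i (fst z) (snd z)" for z
  define \<mu> where "\<mu> = measure_pmf.expectation Pr D"
  have r1: "r \<ge> 1" using r by simp
  have ip: "integrable (measure_pmf Pr) (h :: _ \<Rightarrow> real)" for h
    unfolding Pr_def by (rule integrable_pair[OF valid])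
  have X01: "0 \<le> X" "X \<le> 1" unfolding X_def using freq_bounds[OF valid i, of "r - 1"] r by auto
  have mu0: "0 \<le> \<mu>" unfolding \<mu>_def Pr_def D_def by (rule drift[where g=g]) (use valid i r1 f gm in auto)
  have eps: "measure_pmf.expectation (cga_step n r K f p) (\<lambda>q. q i (r - 1) - X) = \<mu> / K"
  proof -
    have "measure_pmf.expectation (cga_step n r K f p) (\<lambda>q. q i (r - 1) - X) =
          measure_pmf.expectation Pr (\<lambda>z. D z / K)"
      unfolding exp_step Pr_def X_def D_def win_i ..
    also have "\<dots> = \<mu> / K" unfolding \<mu>_def by simp
    finally show ?thesis .
  qed
  have EA: "measure_pmf.expectation Pr (\<lambda>z. ind r (fst z i)) = X"
    unfolding Pr_def X_def using E_ind[OF valid i r1] expectation_pair_pmf_fst[where f="\<lambda>x. ind r (x i)" and p="sample n r p" and q="sample n r p"] by simp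
  have EB: "measure_pmf.expectation Pr (\<lambda>z. ind r (snd z i)) = X"
    unfolding Pr_def X_def using E_ind[OF valid i r1] expectation_pair_pmf_snd[where f="\<lambda>x. ind r (x i)" and p="sample n r p" and q="sample n r p"] by simp
  have EAB: "measure_pmf.expectation Pr (\<lambda>z. ind r (fst z i) * ind r (snd z i)) = X * X"
    unfolding Pr_def X_def using E_ind[OF valid i r1] exp_pair_prod[OF valid, of "\<lambda>x. ind r (x i)" "\<lambda>x. ind r (x i)"] by simp
  have "sub_gaussian (cga_step n r K f p) (\<lambda>q. q i (r - 1) - X - \<mu> / K)
              (4 * X * (1 - X) / K^2 + 2 * (\<mu> / K) / K) K"
    unfolding sub_gaussian_def
  proof (intro allI impI, elim conjE)
    fix l :: real assume l0: "0 \<le> l" and lK: "l \<le> K"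
    define s where "s = l / K"
    have s0: "0 \<le> s" and s1: "s \<le> 1" using l0 lK K by (auto simp: s_def)
    define w where "w = exp s - 1 - s"
    define a where "a z = ind r (fst z i)" for z :: "(nat \<Rightarrow> nat) \<times> (nat \<Rightarrow> nat)"
    define b where "b z = ind r (snd z i)" for z :: "(nat \<Rightarrow> nat) \<times> (nat \<Rightarrow> nat)"
    have "measure_pmf.expectation (cga_step n r K f p) (\<lambda>q. exp (l * (q i (r - 1) - X - \<mu> / K)))
        = measure_pmf.expectation Pr (\<lambda>z. exp (-(s*\<mu>)) * exp (s * D z))"
    proof -
      have "measure_pmf.expectation (cga_step n r K f p) (\<lambda>q. exp (l * (q i (r - 1) - X - \<mu> / K)))
          = measure_pmf.expectation Pr (\<lambda>z. exp (l * (D z / K - \<mu> / K)))"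
        unfolding exp_step Pr_def X_def D_def
      proof (rule Bochner_Integration.integral_cong)
        fix z :: "(nat \<Rightarrow> nat) \<times> (nat \<Rightarrow> nat)"
        have "win f K p (fst z) (snd z) i (r - 1) = p i (r - 1) + dY f r i (fst z) (snd z) / K"
          using win_i[of f K p "fst z" "snd z" i r] by linarith
        thus "exp (l * (win f K p (fst z) (snd z) i (r - 1) - p i (r - 1) - \<mu> / K)) =
              exp (l * (dY f r i (fst z) (snd z) / K - \<mu> / K))" by simp
      qed simp
      also have "\<dots> = measure_pmf.expectation Pr (\<lambda>z. exp (-(s*\<mu>)) * exp (s * D z))"
      proof (rule Bochner_Integration.integral_cong)
        fix z :: "(nat \<Rightarrow> nat) \<times> (nat \<Rightarrow> nat)"
        have "l * (D z / K - \<mu> / K) = -(s*\<mu>) + s * D z" using K by (simp add: s_def field_simps)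
        thus "exp (l * (D z / K - \<mu> / K)) = exp (-(s*\<mu>)) * exp (s * D z)" by (simp only: exp_add)
      qed simp
      finally show ?thesis .
    qed
    also have "\<dots> = exp (-(s*\<mu>)) * measure_pmf.expectation Pr (\<lambda>z. exp (s * D z))" by simp
    also have "\<dots> \<le> exp (-(s*\<mu>)) * measure_pmf.expectation Pr (\<lambda>z. 1 + s * D z + (a z + b z - 2 * a z * b z) * w)"
    proof (rule mult_left_mono)
      show "measure_pmf.expectation Pr (\<lambda>z. exp (s * D z)) \<le> measure_pmf.expectation Pr (\<lambda>z. 1 + s * D z + (a z + b z - 2 * a z * b z) * w)"
      proof (rule integral_mono[OF ip ip])
        fix z
        show "exp (s * D z) \<le> 1 + s * D z + (a z + b z - 2 * a z * b z) * w"
          unfolding D_def dY_def a_def b_def w_def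
          by (rule pw1[OF _ _ s0]) (auto simp: ind_def)
      qed
    qed simp
    also have "measure_pmf.expectation Pr (\<lambda>z. 1 + s * D z + (a z + b z - 2 * a z * b z) * w)
             = 1 + s * \<mu> + (2 * X * (1 - X)) * w"
    proof -
      have "measure_pmf.expectation Pr (\<lambda>z. 1 + s * D z + (a z + b z - 2 * a z * b z) * w)
          = measure_pmf.expectation Pr (\<lambda>z. 1) + s * measure_pmf.expectation Pr D
            + (measure_pmf.expectation Pr a + measure_pmf.expectation Pr b - 2 * measure_pmf.expectation Pr (\<lambda>z. a z * b z)) * w"
      proof -
        have 1: "measure_pmf.expectation Pr (\<lambda>z. 1 + s * D z + (a z + b z - 2 * a z * b z) * w)
           = measure_pmf.expectation Pr (\<lambda>z. 1 + s * D z) + measure_pmf.expectation Pr (\<lambda>z. (a z + b z - 2 * a z * b z) * w)"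
          by (rule Bochner_Integration.integral_add[OF ip ip])
        have 2: "measure_pmf.expectation Pr (\<lambda>z. 1 + s * D z) = measure_pmf.expectation Pr (\<lambda>z. 1) + s * measure_pmf.expectation Pr D"
          by (subst Bochner_Integration.integral_add[OF ip ip]) simp
        have 3: "measure_pmf.expectation Pr (\<lambda>z. (a z + b z - 2 * a z * b z) * w) = measure_pmf.expectation Pr (\<lambda>z. a z + b z - 2 * a z * b z) * w"
          by (rule integral_mult_left_zero)
        have 4: "measure_pmf.expectation Pr (\<lambda>z. a z + b z - 2 * a z * b z) = measure_pmf.expectation Pr (\<lambda>z. a z + b z) - measure_pmf.expectation Pr (\<lambda>z. 2 * a z * b z)"
          by (rule Bochner_Integration.integral_diff[OF ip ip])
        have 5: "measure_pmf.expectation Pr (\<lambda>z. a z + b z) = measure_pmf.expectation Pr a + measure_pmf.expectation Pr b"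
          by (rule Bochner_Integration.integral_add[OF ip ip])
        have 6: "measure_pmf.expectation Pr (\<lambda>z. 2 * a z * b z) = 2 * measure_pmf.expectation Pr (\<lambda>z. a z * b z)"
        proof -
          have "(\<lambda>z. 2 * a z * b z) = (\<lambda>z. 2 * (a z * b z))" by (simp add: fun_eq_iff mult.assoc)
          thus ?thesis by simp
        qed
        show ?thesis unfolding 1 2 3 4 5 6 by simp
      qed
      thus ?thesis unfolding \<mu>_def using EA EB EAB unfolding a_def b_def by (simp add: algebra_simps)
    qed
    also have "exp (-(s*\<mu>)) * (1 + s * \<mu> + (2 * X * (1 - X)) * w) \<le> exp (s^2 * (2 * X * (1 - X) + \<mu>))"
      unfolding w_def by (rule R1[OF mu0 s0 s1]) (use X01 in simp)
    also have "s^2 * (2 * X * (1 - X) + \<mu>) = l^2 * (4 * X * (1 - X) / K^2 + 2 * (\<mu> / K) / K) / 2"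
      using K by (simp add: s_def field_simps power2_eq_square)
    finally show "measure_pmf.expectation (cga_step n r K f p) (\<lambda>q. exp (l * (q i (r - 1) - X - \<mu> / K)))
        \<le> exp (l^2 * (4 * X * (1 - X) / K^2 + 2 * (\<mu> / K) / K) / 2)" .
  qed
  thus ?thesis unfolding Let_def X_def[symmetric] eps .
qed

lemma Fk_bound:
  fixes X s :: real
  assumes "0 \<le> X" "X \<le> 1" "0 \<le> s" "s \<le> 1"
  shows "0 \<le> (X * exp s + (1 - X)) * (X * exp (-s) + (1 - X))"
    "(X * exp s + (1 - X)) * (X * exp (-s) + (1 - X)) \<le> exp (2 * s^2 * (1 - X))"
proof -
  show "0 \<le> (X * exp s + (1 - X)) * (X * exp (-s) + (1 - X))" using assms by simp
  define c where "c = exp s + exp (-s) - 2"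
  have c: "0 \<le> c" "c \<le> 2 * s^2" using cosh_bound[OF assms(3,4)] by (auto simp: c_def)
  have ee: "exp s * exp (-s) = 1" by (simp add: exp_minus_inverse)
  have "(X * exp s + (1 - X)) * (X * exp (-s) + (1 - X)) = X*X*(exp s * exp (-s)) + X*(1-X)*(exp s + exp (-s)) + (1-X)*(1-X)"
    by (simp add: algebra_simps)
  also have "\<dots> = 1 + (1 - X) * (X * c)" unfolding ee c_def by (simp add: algebra_simps)
  also have "\<dots> \<le> 1 + (1 - X) * (2 * s^2)"
  proof -
    have "X * c \<le> 2 * s^2" using c assms by (metis mult_left_le_one_le order_trans)
    thus ?thesis using assms by (simp add: mult_left_mono)
  qed
  also have "\<dots> \<le> exp (2 * s^2 * (1 - X))" using exp_ge_add_one_self[of "2 * s^2 * (1 - X)"] by (simp add: ac_simps)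
  finally show "(X * exp s + (1 - X)) * (X * exp (-s) + (1 - X)) \<le> exp (2 * s^2 * (1 - X))" .
qed

definition CC :: "nat \<Rightarrow> nat \<Rightarrow> (nat \<Rightarrow> nat) \<Rightarrow> real" where
  "CC n r x = (\<Sum>k<n. ind r (x k))"

lemma E_expC:
  assumes valid: "valid_freq n r p" and r1: "r \<ge> 1"
  shows "measure_pmf.expectation (sample n r p) (\<lambda>x. exp (t * CC n r x)) = (\<Prod>k<n. p k (r - 1) * exp t + (1 - p k (r - 1)))"
proof -
  have "measure_pmf.expectation (sample n r p) (\<lambda>x. exp (t * CC n r x)) =
        measure_pmf.expectation (sample n r p) (\<lambda>x. \<Prod>k<n. (\<lambda>k v. exp (t * ind r v)) k (x k))"
    unfolding CC_def by (simp add: sum_distrib_left exp_sum)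
  also have "\<dots> = (\<Prod>k<n. \<Sum>j<r. p k j * exp (t * ind r j))"
    by (rule exp_prod_S[OF valid]) simp
  also have "\<dots> = (\<Prod>k<n. p k (r - 1) * exp t + (1 - p k (r - 1)))"
  proof (rule prod.cong)
    fix k assume "k \<in> {..<n}"
    hence k: "k < n" by simp
    have "(\<Sum>j<r. p k j * exp (t * ind r j)) = (\<Sum>j<r. p k j * (if j = r - 1 then exp t else 1))"
      by (rule sum.cong) (auto simp: ind_def)
    also have "\<dots> = p k (r - 1) * exp t + (1 - p k (r - 1)) * 1" by (rule sum_ind[OF valid k r1])
    finally show "(\<Sum>j<r. p k j * exp (t * ind r j)) = p k (r - 1) * exp t + (1 - p k (r - 1))" by simp
  qed simp
  finally show ?thesis .
qed

definition YT :: "((nat \<Rightarrow> nat) \<Rightarrow> real) \<Rightarrow> nat \<Rightarrow> nat \<Rightarrow> (nat \<Rightarrow> nat) \<Rightarrow> (nat \<Rightarrow> nat) \<Rightarrow> real" where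
  "YT f n r x y = (if f x < f y then CC n r y - CC n r x else CC n r x - CC n r y)"

lemma phi_win:
  "(\<Sum>k<n. 1 - p k (r - 1)) - (\<Sum>k<n. 1 - win f K p x y k (r - 1)) = YT f n r x y / K"
proof -
  have "(\<Sum>k<n. 1 - p k (r - 1)) - (\<Sum>k<n. 1 - win f K p x y k (r - 1)) = (\<Sum>k<n. win f K p x y k (r - 1) - p k (r - 1))"
    by (simp add: sum_subtractf)
  also have "\<dots> = (\<Sum>k<n. dY f r k x y / K)" by (intro sum.cong refl win_i)
  also have "\<dots> = (\<Sum>k<n. dY f r k x y) / K" by (simp add: sum_divide_distrib)
  also have "(\<Sum>k<n. dY f r k x y) = YT f n r x y"
    unfolding dY_def YT_def CC_def by (cases "f x < f y") (simp_all add: sum_subtractf)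
  finally show ?thesis .
qed

lemma part2:
  assumes valid: "valid_freq n r p" and r: "r \<ge> 2" and K: "K > 0"
  shows "let \<phi> = (\<lambda>q. \<Sum>i<n. 1 - q i (r - 1));
              \<epsilon> = measure_pmf.expectation (cga_step n r K f p) (\<lambda>q. \<phi> p - \<phi> q)
          in \<epsilon> \<ge> sqrt (\<phi> p) / (30 * K) \<longrightarrow>
             sub_gaussian (cga_step n r K f p) (\<lambda>q. \<phi> p - \<phi> q - \<epsilon>) (8 * \<phi> p / K^2) K"
proof -
  define \<phi> where "\<phi> = (\<lambda>q::nat \<Rightarrow> nat \<Rightarrow> real. \<Sum>i<n. 1 - q i (r - 1))"
  define Pr where "Pr = pair_pmf (sample n r p) (sample n r p)"
  define Y where "Y z = YT f n r (fst z) (snd z)" for z :: "(nat \<Rightarrow> nat) \<times> (nat \<Rightarrow> nat)"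
  define \<mu> where "\<mu> = measure_pmf.expectation Pr Y"
  have r1: "r \<ge> 1" using r by simp
  have ip: "integrable (measure_pmf Pr) (h :: _ \<Rightarrow> real)" for h
    unfolding Pr_def by (rule integrable_pair[OF valid])
  have X01: "0 \<le> p k (r - 1)" "p k (r - 1) \<le> 1" if "k < n" for k
    using freq_bounds[OF valid that, of "r - 1"] r by auto
  have phi0: "0 \<le> \<phi> p" unfolding \<phi>_def by (intro sum_nonneg) (use X01 in auto)
  have eps: "measure_pmf.expectation (cga_step n r K f p) (\<lambda>q. \<phi> p - \<phi> q) = \<mu> / K"
  proof -
    have "measure_pmf.expectation (cga_step n r K f p) (\<lambda>q. \<phi> p - \<phi> q) =
          measure_pmf.expectation Pr (\<lambda>z. Y z / K)"
      unfolding exp_step Pr_def \<phi>_def Y_def phi_win ..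
    also have "\<dots> = \<mu> / K" unfolding \<mu>_def by simp
    finally show ?thesis .
  qed
  show ?thesis unfolding Let_def \<phi>_def[symmetric] eps
  proof (intro impI)
    assume hyp: "sqrt (\<phi> p) / (30 * K) \<le> \<mu> / K"
    have mu0: "0 \<le> \<mu>"
    proof -
      have "0 \<le> sqrt (\<phi> p) / (30 * K)" by (intro divide_nonneg_pos) (use K phi0 in auto)
      hence "0 \<le> \<mu> / K" using hyp by linarith
      thus ?thesis using K by (simp add: divide_nonneg_pos zero_le_divide_iff)
    qed
    show "sub_gaussian (cga_step n r K f p) (\<lambda>q. \<phi> p - \<phi> q - \<mu> / K) (8 * \<phi> p / K^2) K"
      unfolding sub_gaussian_def
    proof (intro allI impI, elim conjE)
      fix l :: real assume l0: "0 \<le> l" and lK: "l \<le> K"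
      define s where "s = l / K"
      have s0: "0 \<le> s" and s1: "s \<le> 1" using l0 lK K by (auto simp: s_def)
      define u where "u x = exp (s * CC n r x)" for x
      define v where "v x = exp (-(s * CC n r x))" for x
      define P where "P = measure_pmf.expectation (sample n r p) u * measure_pmf.expectation (sample n r p) v"
      have "measure_pmf.expectation (cga_step n r K f p) (\<lambda>q. exp (l * (\<phi> p - \<phi> q - \<mu> / K)))
          = measure_pmf.expectation Pr (\<lambda>z. exp (-(s*\<mu>)) * exp (s * Y z))"
        unfolding exp_step Pr_def
      proof (rule Bochner_Integration.integral_cong)
        fix z :: "(nat \<Rightarrow> nat) \<times> (nat \<Rightarrow> nat)"
        have "l * (\<phi> p - \<phi> (win f K p (fst z) (snd z)) - \<mu> / K) = l * (Y z / K - \<mu> / K)"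
          unfolding \<phi>_def Y_def phi_win ..
        also have "\<dots> = -(s*\<mu>) + s * Y z" using K by (simp add: s_def field_simps)
        finally show "exp (l * (\<phi> p - \<phi> (win f K p (fst z) (snd z)) - \<mu> / K)) = exp (-(s*\<mu>)) * exp (s * Y z)"
          by (simp only: exp_add)
      qed simp
      also have "\<dots> = exp (-(s*\<mu>)) * measure_pmf.expectation Pr (\<lambda>z. exp (s * Y z))" by simp
      also have "\<dots> \<le> exp (-(s*\<mu>)) * measure_pmf.expectation Pr (\<lambda>z. s * Y z + u (fst z) * v (snd z) + v (fst z) * u (snd z) - 1)"
      proof (rule mult_left_mono)
        show "measure_pmf.expectation Pr (\<lambda>z. exp (s * Y z)) \<le> measure_pmf.expectation Pr (\<lambda>z. s * Y z + u (fst z) * v (snd z) + v (fst z) * u (snd z) - 1)"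
        proof (rule integral_mono[OF ip ip])
          fix z :: "(nat \<Rightarrow> nat) \<times> (nat \<Rightarrow> nat)"
          have "exp (s * Y z) + exp (-(s * Y z)) = u (fst z) * v (snd z) + v (fst z) * u (snd z)"
            unfolding Y_def YT_def u_def v_def
            by (cases "f (fst z) < f (snd z)") (simp_all add: exp_add[symmetric] algebra_simps)
          moreover have "exp (s * Y z) \<le> s * Y z + exp (s * Y z) + exp (-(s * Y z)) - 1" by (rule pw2)
          ultimately show "exp (s * Y z) \<le> s * Y z + u (fst z) * v (snd z) + v (fst z) * u (snd z) - 1" by linarith
        qed
      qed simp
      also have "measure_pmf.expectation Pr (\<lambda>z. s * Y z + u (fst z) * v (snd z) + v (fst z) * u (snd z) - 1)
              = s * \<mu> + 2 * P - 1"
      proof -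
        have 1: "measure_pmf.expectation Pr (\<lambda>z. s * Y z + u (fst z) * v (snd z) + v (fst z) * u (snd z) - 1)
           = measure_pmf.expectation Pr (\<lambda>z. s * Y z + u (fst z) * v (snd z) + v (fst z) * u (snd z)) - 1"
          by (subst Bochner_Integration.integral_diff[OF ip ip]) simp
        have 2: "measure_pmf.expectation Pr (\<lambda>z. s * Y z + u (fst z) * v (snd z) + v (fst z) * u (snd z))
           = measure_pmf.expectation Pr (\<lambda>z. s * Y z + u (fst z) * v (snd z)) + measure_pmf.expectation Pr (\<lambda>z. v (fst z) * u (snd z))"
          by (rule Bochner_Integration.integral_add[OF ip ip])
        have 3: "measure_pmf.expectation Pr (\<lambda>z. s * Y z + u (fst z) * v (snd z))
           = s * \<mu> + measure_pmf.expectation Pr (\<lambda>z. u (fst z) * v (snd z))"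
          unfolding \<mu>_def by (subst Bochner_Integration.integral_add[OF ip ip]) simp
        have 4: "measure_pmf.expectation Pr (\<lambda>z. u (fst z) * v (snd z)) = P"
          unfolding Pr_def P_def by (rule exp_pair_prod[OF valid])
        have 5: "measure_pmf.expectation Pr (\<lambda>z. v (fst z) * u (snd z)) = P"
          unfolding Pr_def P_def by (subst exp_pair_prod[OF valid]) simp
        show ?thesis unfolding 1 2 3 4 5 by simp
      qed
      also have "exp (-(s*\<mu>)) * (s * \<mu> + 2 * P - 1) \<le> exp (2 * (2 * s^2 * \<phi> p))"
      proof (rule R2[OF mu0 s0])
        show "0 \<le> 2 * s^2 * \<phi> p" using phi0 by simp
        have "P = (\<Prod>k<n. (p k (r - 1) * exp s + (1 - p k (r - 1))) * (p k (r - 1) * exp (-s) + (1 - p k (r - 1))))"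
          unfolding P_def u_def v_def
          using E_expC[OF valid r1, of s] E_expC[OF valid r1, of "-s"] by (simp add: prod.distrib)
        also have "\<dots> \<le> (\<Prod>k<n. exp (2 * s^2 * (1 - p k (r - 1))))"
          by (rule prod_mono) (use Fk_bound[OF X01(1) X01(2) s0 s1] in auto)
        also have "\<dots> = exp (2 * s^2 * \<phi> p)"
          unfolding \<phi>_def by (simp add: exp_sum sum_distrib_left)
        finally show "P \<le> exp (2 * s^2 * \<phi> p)" .
      qed
      also have "2 * (2 * s^2 * \<phi> p) = l^2 * (8 * \<phi> p / K^2) / 2"
        using K by (simp add: s_def field_simps power2_eq_square)
      finally show "measure_pmf.expectation (cga_step n r K f p) (\<lambda>q. exp (l * (\<phi> p - \<phi> q - \<mu> / K)))
          \<le> exp (l^2 * (8 * \<phi> p / K^2) / 2)" .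
    qed
  qed
qed

theorem lemma7:
  fixes n r :: nat and K :: real and f :: "(nat \<Rightarrow> nat) \<Rightarrow> real"
    and p :: "nat \<Rightarrow> nat \<Rightarrow> real"
  assumes "n \<ge> 1" and "r \<ge> 2" and "K > 0"
    and "f = rOneMax r n \<or> f = GOneMax n"
    and "cga_reachable n r K f p" and "valid_freq n r p"
  shows "(\<forall>i<n.
            let X = p i (r - 1);
                \<epsilon> = measure_pmf.expectation (cga_step n r K f p) (\<lambda>q. q i (r - 1) - X)
            in sub_gaussian (cga_step n r K f p) (\<lambda>q. q i (r - 1) - X - \<epsilon>)
                 (4 * X * (1 - X) / K^2 + 2 * \<epsilon> / K) K)
       \<and> (let \<phi> = (\<lambda>q. \<Sum>i<n. 1 - q i (r - 1));
              \<epsilon> = measure_pmf.expectation (cga_step n r K f p) (\<lambda>q. \<phi> p - \<phi> q)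
          in \<epsilon> \<ge> sqrt (\<phi> p) / (30 * K) \<longrightarrow>
             sub_gaussian (cga_step n r K f p) (\<lambda>q. \<phi> p - \<phi> q - \<epsilon>) (8 * \<phi> p / K^2) K)"
proof
  obtain g where g: "\<And>z. f z = (\<Sum>k<n. g (z k))" "\<And>v. v < r \<Longrightarrow> g v \<le> g (r - 1)"
    using f_form[OF assms(4)] by blast
  show "\<forall>i<n.
            let X = p i (r - 1);
                \<epsilon> = measure_pmf.expectation (cga_step n r K f p) (\<lambda>q. q i (r - 1) - X)
            in sub_gaussian (cga_step n r K f p) (\<lambda>q. q i (r - 1) - X - \<epsilon>)
                 (4 * X * (1 - X) / K^2 + 2 * \<epsilon> / K) K"
  proof (intro allI impI)
    fix i assume "i < n"
    show "let X = p i (r - 1);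
                \<epsilon> = measure_pmf.expectation (cga_step n r K f p) (\<lambda>q. q i (r - 1) - X)
            in sub_gaussian (cga_step n r K f p) (\<lambda>q. q i (r - 1) - X - \<epsilon>)
                 (4 * X * (1 - X) / K^2 + 2 * \<epsilon> / K) K"
      by (rule part1[where g=g]) (use assms \<open>i < n\<close> g in auto)
  qed
next
  show "let \<phi> = (\<lambda>q. \<Sum>i<n. 1 - q i (r - 1));
              \<epsilon> = measure_pmf.expectation (cga_step n r K f p) (\<lambda>q. \<phi> p - \<phi> q)
          in \<epsilon> \<ge> sqrt (\<phi> p) / (30 * K) \<longrightarrow>
             sub_gaussian (cga_step n r K f p) (\<lambda>q. \<phi> p - \<phi> q - \<epsilon>) (8 * \<phi> p / K^2) K"
    by (rule part2) (use assms in auto)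
qed

end
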